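(* Consider the Gaussian model: $\mu\in\mathbb{R}^d$ is unknown, $\theta_1,\ldots,\theta_m\sim\mathcal{N}(\mu,\sigma_\theta^2 I_d)$ i.i.d., and client $i$ holds $X_{i1},\ldots,X_{in}\sim\mathcal{N}(\theta_i,\sigma_x^2 I_d)$ i.i.d., with $\sigma_\theta\ge 0,\sigma_x>0$ known. Let $\overline{X}_i=\frac{1}{n}\sum_{j=1}^n X_{ij}$. Solving the maximum-likelihood problem $\widehat{\theta}_1,\ldots,\widehat{\theta}_m,\widehat{\mu}=\arg\max_{\theta_1,\ldots,\theta_m,\mu} p(\theta_1,\ldots,\theta_m,X_1,\ldots,X_m\mid\mu)$ yields the closed forms $\widehat{\mu}=\frac{1}{m}\sum_{i=1}^m\overline{X}_i$ and $\widehat{\theta}_i=a\overline{X}_i+(1-a)\widehat{\mu}$ for $i\in[m]$, where $a=\frac{\sigma_\theta^2}{\sigma_\theta^2+\sigma_x^2/n}$. This estimator $\widehat{\theta}_i=a\overline{X}_i+(1-a)\widehat{\mu}$ achieves MSE $\mathbb{E}_{\theta_i,X_1,\ldots,X_m}\|\widehat{\theta}_i-\theta_i\|^2\le\frac{d\sigma_x^2}{n}\left(\frac{1-a}{m}+a\right)$.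
   Context: Personalized estimation setting with $m$ clients, each with $n$ samples, generated by the hierarchical Gaussian model described in the claim. *)

theory Defs
  imports "HOL-Probability.Probability"
begin

definition gauss_pdf :: "real^'d \<Rightarrow> real \<Rightarrow> real^'d \<Rightarrow> real" where
  "gauss_pdf mu s x =
     (2 * pi * s\<^sup>2) powr (- real CARD('d) / 2) * exp (- (norm (x - mu))\<^sup>2 / (2 * s\<^sup>2))"

definition gaussian_vec :: "real^'d \<Rightarrow> real \<Rightarrow> (real^'d) measure" where
  "gaussian_vec mu s =
     (if s = 0 then return borel mu else density lborel (\<lambda>x. ennreal (gauss_pdf mu s x)))"

definition likelihood ::
  "nat \<Rightarrow> nat \<Rightarrow> real \<Rightarrow> real \<Rightarrow> (nat \<Rightarrow> nat \<Rightarrow> real^'d) \<Rightarrow> (nat \<Rightarrow> real^'d) \<Rightarrow> real^'d \<Rightarrow> real" where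
  "likelihood m n s_th s_x x th mu =
     (\<Prod>i<m. gauss_pdf mu s_th (th i) * (\<Prod>j<n. gauss_pdf (th i) s_x (x i j)))"

definition xbar :: "nat \<Rightarrow> (nat \<Rightarrow> nat \<Rightarrow> real^'d) \<Rightarrow> nat \<Rightarrow> real^'d" where
  "xbar n x i = (1 / real n) *\<^sub>R (\<Sum>j<n. x i j)"

definition muhat :: "nat \<Rightarrow> nat \<Rightarrow> (nat \<Rightarrow> nat \<Rightarrow> real^'d) \<Rightarrow> real^'d" where
  "muhat m n x = (1 / real m) *\<^sub>R (\<Sum>i<m. xbar n x i)"

definition shrink :: "nat \<Rightarrow> real \<Rightarrow> real \<Rightarrow> real" where
  "shrink n s_th s_x = s_th\<^sup>2 / (s_th\<^sup>2 + s_x\<^sup>2 / real n)"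

definition thetahat ::
  "nat \<Rightarrow> nat \<Rightarrow> real \<Rightarrow> real \<Rightarrow> (nat \<Rightarrow> nat \<Rightarrow> real^'d) \<Rightarrow> nat \<Rightarrow> real^'d" where
  "thetahat m n s_th s_x x i =
     shrink n s_th s_x *\<^sub>R xbar n x i + (1 - shrink n s_th s_x) *\<^sub>R muhat m n x"

end

theory Submission
  imports Defs
begin


lemma gauss_pdf_prod:
  fixes mu x :: "real^'d" assumes s: "s > 0"
  shows "gauss_pdf mu s x = (\<Prod>b\<in>Basis. normal_density (mu \<bullet> b) s (x \<bullet> b))"
proof -
  let ?y = "2 * pi * s\<^sup>2"
  have y: "?y > 0" using s by simp
  have "(\<Prod>b\<in>Basis. normal_density (mu \<bullet> b) s (x \<bullet> b))
     = (\<Prod>b\<in>(Basis::(real^'d) set). 1 / sqrt ?y) * (\<Prod>b\<in>(Basis::(real^'d) set). exp (-(x \<bullet> b - mu \<bullet> b)\<^sup>2 / (2 * s\<^sup>2)))"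
    by (simp only: normal_density_def prod.distrib)
  also have "(\<Prod>b\<in>(Basis::(real^'d) set). 1 / sqrt ?y) = (1 / sqrt ?y) ^ CARD('d)"
    by simp
  also have "\<dots> = ?y powr (- real CARD('d) / 2)"
  proof -
    have "1 / sqrt ?y = ?y powr (-1/2)" using y
      by (simp add: powr_minus_divide powr_half_sqrt)
    hence "(1 / sqrt ?y) ^ CARD('d) = (?y powr (-1/2)) powr real CARD('d)"
      using y by (subst powr_realpow) auto
    also have "\<dots> = ?y powr (- real CARD('d) / 2)" by (simp add: powr_powr)
    finally show ?thesis .
  qed
  also have "(\<Prod>b\<in>(Basis::(real^'d) set). exp (-(x \<bullet> b - mu \<bullet> b)\<^sup>2 / (2 * s\<^sup>2)))
      = exp (\<Sum>b\<in>(Basis::(real^'d) set). -(x \<bullet> b - mu \<bullet> b)\<^sup>2 / (2 * s\<^sup>2))"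
    by (simp add: exp_sum)
  also have "(\<Sum>b\<in>(Basis::(real^'d) set). -(x \<bullet> b - mu \<bullet> b)\<^sup>2 / (2 * s\<^sup>2))
      = - (norm (x - mu))\<^sup>2 / (2 * s\<^sup>2)"
  proof -
    have "(norm (x - mu))\<^sup>2 = (\<Sum>b\<in>(Basis::(real^'d) set). (x \<bullet> b - mu \<bullet> b)\<^sup>2)"
      unfolding power2_norm_eq_inner by (subst euclidean_inner) (simp add: inner_diff_left power2_eq_square)
    thus ?thesis by (simp add: sum_divide_distrib[symmetric] sum_negf)
  qed
  finally show ?thesis unfolding gauss_pdf_def by simp
qed

lemma lborel_prod_integral:
  fixes h :: "'a::euclidean_space \<Rightarrow> real \<Rightarrow> real"
  assumes int: "\<And>b. b \<in> Basis \<Longrightarrow> integrable lborel (h b)"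
  shows "integrable lborel (\<lambda>x::'a. \<Prod>b\<in>Basis. h b (x \<bullet> b))"
    and "(\<integral>x. (\<Prod>b\<in>Basis. h b (x \<bullet> b)) \<partial>(lborel::'a measure)) = (\<Prod>b\<in>Basis. integral\<^sup>L lborel (h b))"
proof -
  interpret product_sigma_finite "\<lambda>_::'a. lborel :: real measure"
    by (simp add: product_sigma_finite_def lborel.sigma_finite_measure_axioms)
  have meas: "(\<lambda>f. \<Sum>b\<in>Basis. f b *\<^sub>R b) \<in> measurable (\<Pi>\<^sub>M b\<in>(Basis::'a set). lborel) (borel :: 'a measure)"
    by measurable
  have eq: "\<And>f. (\<Prod>b\<in>Basis. h b ((\<Sum>b'\<in>Basis. f b' *\<^sub>R b') \<bullet> b)) = (\<Prod>b\<in>(Basis::'a set). h b (f b))"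
    by (intro prod.cong refl) (simp add: inner_sum_left inner_Basis if_distrib sum.delta cong: if_cong)
  have hm: "\<And>b. b \<in> Basis \<Longrightarrow> h b \<in> borel_measurable lborel" using int by auto
  have gm: "(\<lambda>x::'a. \<Prod>b\<in>Basis. h b (x \<bullet> b)) \<in> borel_measurable borel"
  proof (intro borel_measurable_prod)
    fix b :: 'a assume b: "b \<in> Basis"
    have "(\<lambda>x::'a. x \<bullet> b) \<in> borel_measurable borel" by simp
    moreover have "h b \<in> borel_measurable borel" using hm[OF b] by simp
    ultimately show "(\<lambda>x. h b (x \<bullet> b)) \<in> borel_measurable borel" by (rule measurable_compose)
  qed
  show "integrable lborel (\<lambda>x::'a. \<Prod>b\<in>Basis. h b (x \<bullet> b))"
    apply (subst lborel_eq)
    apply (subst integrable_distr_eq[OF meas])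
    using gm apply simp
    unfolding eq
    by (rule product_integrable_prod) (auto intro: int)
  show "(\<integral>x. (\<Prod>b\<in>Basis. h b (x \<bullet> b)) \<partial>(lborel::'a measure)) = (\<Prod>b\<in>Basis. integral\<^sup>L lborel (h b))"
    apply (subst lborel_eq)
    apply (subst integral_distr[OF meas])
    using gm apply simp
    unfolding eq
    by (rule product_integral_prod) (auto intro: int)
qed

lemma gauss_lborel_moment:
  fixes mu :: "real^'d" and q :: 'd and k :: nat assumes s: "s > 0"
  shows "integrable lborel (\<lambda>x. gauss_pdf mu s x * (x$q - mu$q)^k)"
    and "(\<integral>x. gauss_pdf mu s x * (x$q - mu$q)^k \<partial>lborel) = (\<integral>t. normal_density (mu$q) s t * (t - mu$q)^k \<partial>lborel)"
proof -
  define b0 :: "real^'d" where "b0 = axis q 1"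
  have b0: "b0 \<in> Basis" unfolding b0_def by (simp add: axis_in_Basis_iff)
  define h where "h b t = normal_density (mu \<bullet> b) s t * (if b = b0 then (t - mu \<bullet> b)^k else 1)" for b :: "real^'d" and t
  have int: "integrable lborel (h b)" if "b \<in> Basis" for b
    unfolding h_def using integrable_normal_moment[OF s, of "mu \<bullet> b" k] integrable_normal_density[OF s] by (cases "b = b0") auto
  have eq: "(\<Prod>b\<in>Basis. h b (x \<bullet> b)) = gauss_pdf mu s x * (x$q - mu$q)^k" for x
  proof -
    have "(\<Prod>b\<in>Basis. h b (x \<bullet> b)) = (\<Prod>b\<in>Basis. normal_density (mu \<bullet> b) s (x \<bullet> b)) *
        (\<Prod>b\<in>(Basis::(real^'d) set). (if b = b0 then (x \<bullet> b - mu \<bullet> b)^k else 1))"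
      unfolding h_def by (simp only: prod.distrib)
    also have "(\<Prod>b\<in>(Basis::(real^'d) set). (if b = b0 then (x \<bullet> b - mu \<bullet> b)^k else 1)) = (x \<bullet> b0 - mu \<bullet> b0)^k"
      using b0 by (simp add: prod.delta)
    finally show ?thesis by (simp add: gauss_pdf_prod[OF s] b0_def cart_eq_inner_axis)
  qed
  show "integrable lborel (\<lambda>x. gauss_pdf mu s x * (x$q - mu$q)^k)"
    using lborel_prod_integral(1)[of h, OF int] unfolding eq .
  have "(\<integral>x. gauss_pdf mu s x * (x$q - mu$q)^k \<partial>lborel) = (\<Prod>b\<in>Basis. integral\<^sup>L lborel (h b))"
    using lborel_prod_integral(2)[of h, OF int] unfolding eq .
  also have "\<dots> = (\<Prod>b\<in>(Basis::(real^'d) set). if b = b0 then (\<integral>t. normal_density (mu$q) s t * (t - mu$q)^k \<partial>lborel) else 1)"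
    by (intro prod.cong refl) (auto simp: fun_eq_iff[symmetric] h_def[abs_def] b0_def cart_eq_inner_axis integral_normal_density[OF s])
  also have "\<dots> = (\<integral>t. normal_density (mu$q) s t * (t - mu$q)^k \<partial>lborel)"
    using b0 by (simp add: prod.delta)
  finally show "(\<integral>x. gauss_pdf mu s x * (x$q - mu$q)^k \<partial>lborel) = (\<integral>t. normal_density (mu$q) s t * (t - mu$q)^k \<partial>lborel)" .
qed

lemma normal_m1: "s > 0 \<Longrightarrow> (\<integral>t. normal_density m s t * (t - m)^1 \<partial>lborel) = 0"
  using integral_normal_moment_odd[of s m 0] by simp

lemma normal_m2: "s > 0 \<Longrightarrow> (\<integral>t. normal_density m s t * (t - m)^2 \<partial>lborel) = s\<^sup>2"
  using integral_normal_moment_even[of s m 1] by simp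

lemma gauss_pdf_nonneg: "0 \<le> gauss_pdf mu s x"
  unfolding gauss_pdf_def by simp

lemma gauss_pdf_meas: "gauss_pdf mu s \<in> borel_measurable lborel"
  unfolding gauss_pdf_def[abs_def] by measurable

lemma gv_moment:
  fixes c :: "real^'d" and q :: 'd
  assumes s: "s \<ge> 0" and k: "k > 0"
  shows "integrable (gaussian_vec c s) (\<lambda>v. (v$q - c$q)^k)"
    and "integral\<^sup>L (gaussian_vec c s) (\<lambda>v. (v$q - c$q)^k)
         = (if s = 0 then 0 else (\<integral>t. normal_density (c$q) s t * (t - c$q)^k \<partial>lborel))"
proof -
  have gm: "(\<lambda>v::real^'d. (v$q - c$q)^k) \<in> borel_measurable borel" by measurable
  have "integrable (gaussian_vec c s) (\<lambda>v. (v$q - c$q)^k) \<and>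
        integral\<^sup>L (gaussian_vec c s) (\<lambda>v. (v$q - c$q)^k)
         = (if s = 0 then 0 else (\<integral>t. normal_density (c$q) s t * (t - c$q)^k \<partial>lborel))"
  proof (cases "s = 0")
    case True
    have "integrable (return borel c) (\<lambda>v::real^'d. (v$q - c$q)^k)"
      unfolding integrable_iff_bounded using gm by (simp add: nn_integral_return)
    moreover have "integral\<^sup>L (return borel c) (\<lambda>v::real^'d. (v$q - c$q)^k) = 0"
      using gm k by (simp add: integral_return)
    ultimately show ?thesis using True by (simp add: gaussian_vec_def)
  next
    case False
    hence sp: "s > 0" using s by simp
    have gv: "gaussian_vec c s = density lborel (\<lambda>x. ennreal (gauss_pdf c s x))"
      using False by (simp add: gaussian_vec_def)
    show ?thesis unfolding gv
      apply (subst integrable_density[OF _ gauss_pdf_meas])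
        apply (simp add: gm)
       apply (simp add: gauss_pdf_nonneg)
      apply (subst integral_density[OF _ gauss_pdf_meas])
        apply (simp add: gm)
       apply (simp add: gauss_pdf_nonneg)
      using gauss_lborel_moment[OF sp, of c q k] False by simp
  qed
  thus "integrable (gaussian_vec c s) (\<lambda>v. (v$q - c$q)^k)"
    and "integral\<^sup>L (gaussian_vec c s) (\<lambda>v. (v$q - c$q)^k)
         = (if s = 0 then 0 else (\<integral>t. normal_density (c$q) s t * (t - c$q)^k \<partial>lborel))" by auto
qed

lemma gauss_moments:
  fixes V :: "'w \<Rightarrow> real^'d" and c :: "real^'d" and q :: 'd
  assumes V: "V \<in> borel_measurable M" and D: "distr M borel V = gaussian_vec c s" and s: "s \<ge> 0"
  shows "integrable M (\<lambda>\<omega>. (V \<omega> - c)$q)" "(\<integral>\<omega>. (V \<omega> - c)$q \<partial>M) = 0"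
        "integrable M (\<lambda>\<omega>. ((V \<omega> - c)$q)^2)" "(\<integral>\<omega>. ((V \<omega> - c)$q)^2 \<partial>M) = s\<^sup>2"
proof -
  have gm: "(\<lambda>v::real^'d. (v$q - c$q)^k) \<in> borel_measurable borel" for k :: nat by measurable
  have I: "integrable M (\<lambda>\<omega>. (V \<omega> $ q - c$q)^k)" if "k > 0" for k :: nat
    using gv_moment(1)[OF s that, of c q] unfolding D[symmetric]
    by (subst (asm) integrable_distr_eq[OF V gm]) simp
  have E: "(\<integral>\<omega>. (V \<omega> $ q - c$q)^k \<partial>M) = (if s = 0 then 0 else (\<integral>t. normal_density (c$q) s t * (t - c$q)^k \<partial>lborel))"
    if "k > 0" for k :: nat
    using gv_moment(2)[OF s that, of c q] unfolding D[symmetric]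
    by (subst (asm) integral_distr[OF V gm]) simp
  show "integrable M (\<lambda>\<omega>. (V \<omega> - c)$q)" using I[of 1] by simp
  show "integrable M (\<lambda>\<omega>. ((V \<omega> - c)$q)^2)" using I[of 2] by simp
  show "(\<integral>\<omega>. (V \<omega> - c)$q \<partial>M) = 0" using E[of 1] normal_m1[of s "c$q"] s by (simp split: if_splits)
  show "(\<integral>\<omega>. ((V \<omega> - c)$q)^2 \<partial>M) = s\<^sup>2" using E[of 2] normal_m2[of s "c$q"] s by (simp split: if_splits)
qed

lemma (in prob_space) var_sum_indep:
  fixes U :: "'i \<Rightarrow> 'a \<Rightarrow> real" and coef :: "'i \<Rightarrow> real"
  assumes J: "finite J" and ind: "indep_vars (\<lambda>_. borel) U J"
    and I1: "\<And>k. k \<in> J \<Longrightarrow> integrable M (U k)"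
    and E1: "\<And>k. k \<in> J \<Longrightarrow> (\<integral>\<omega>. U k \<omega> \<partial>M) = 0"
    and I2: "\<And>k. k \<in> J \<Longrightarrow> integrable M (\<lambda>\<omega>. (U k \<omega>)^2)"
  shows "integrable M (\<lambda>\<omega>. (\<Sum>k\<in>J. coef k * U k \<omega>)^2)"
    and "(\<integral>\<omega>. (\<Sum>k\<in>J. coef k * U k \<omega>)^2 \<partial>M) = (\<Sum>k\<in>J. (coef k)^2 * (\<integral>\<omega>. (U k \<omega>)^2 \<partial>M))"
proof -
  have sq: "(\<lambda>\<omega>. (\<Sum>k\<in>J. coef k * U k \<omega>)^2) = (\<lambda>\<omega>. \<Sum>k\<in>J. \<Sum>l\<in>J. coef k * coef l * (U k \<omega> * U l \<omega>))"
    by (simp add: power2_eq_square sum_product ac_simps)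
  have pint: "integrable M (\<lambda>\<omega>. U k \<omega> * U l \<omega>) \<and> (\<integral>\<omega>. U k \<omega> * U l \<omega> \<partial>M) = (if k = l then (\<integral>\<omega>. (U k \<omega>)^2 \<partial>M) else 0)"
    if k: "k \<in> J" and l: "l \<in> J" for k l
  proof (cases "k = l")
    case True thus ?thesis using I2[OF k] by (simp add: power2_eq_square)
  next
    case False
    have ind2: "indep_vars (\<lambda>_. borel) U {k,l}" by (rule indep_vars_subset[OF ind]) (use k l in auto)
    have a: "integrable M (\<lambda>\<omega>. \<Prod>i\<in>{k,l}. U i \<omega>)"
      by (rule indep_vars_integrable[OF _ ind2]) (use I1 k l in auto)
    have b: "(\<integral>\<omega>. (\<Prod>i\<in>{k,l}. U i \<omega>) \<partial>M) = (\<Prod>i\<in>{k,l}. \<integral>\<omega>. U i \<omega> \<partial>M)"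
      by (rule indep_vars_lebesgue_integral[OF _ ind2]) (use I1 k l in auto)
    show ?thesis using a b False E1[OF k] by simp
  qed
  show "integrable M (\<lambda>\<omega>. (\<Sum>k\<in>J. coef k * U k \<omega>)^2)"
    unfolding sq using pint by (auto intro!: Bochner_Integration.integrable_sum Bochner_Integration.integrable_mult_right)
  have "(\<integral>\<omega>. (\<Sum>k\<in>J. coef k * U k \<omega>)^2 \<partial>M) = (\<Sum>k\<in>J. \<Sum>l\<in>J. coef k * coef l * (\<integral>\<omega>. U k \<omega> * U l \<omega> \<partial>M))"
    unfolding sq using pint
    by (subst Bochner_Integration.integral_sum) (auto intro!: Bochner_Integration.integrable_sum Bochner_Integration.integrable_mult_right sum.cong simp: Bochner_Integration.integral_sum)
  also have "\<dots> = (\<Sum>k\<in>J. \<Sum>l\<in>J. if k = l then coef k * coef l * (\<integral>\<omega>. (U k \<omega>)^2 \<partial>M) else 0)"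
    using pint by (intro sum.cong refl) auto
  also have "\<dots> = (\<Sum>k\<in>J. (coef k)^2 * (\<integral>\<omega>. (U k \<omega>)^2 \<partial>M))"
    using J by (simp add: sum.delta power2_eq_square)
  finally show "(\<integral>\<omega>. (\<Sum>k\<in>J. coef k * U k \<omega>)^2 \<partial>M) = (\<Sum>k\<in>J. (coef k)^2 * (\<integral>\<omega>. (U k \<omega>)^2 \<partial>M))" .
qed



definition Qf :: "nat \<Rightarrow> nat \<Rightarrow> real \<Rightarrow> real \<Rightarrow> (nat \<Rightarrow> nat \<Rightarrow> real^'d) \<Rightarrow> (nat \<Rightarrow> real^'d) \<Rightarrow> real^'d \<Rightarrow> real" where
  "Qf m n s_th s_x x th nu = (\<Sum>i<m. (norm (th i - nu))\<^sup>2 / (2 * s_th\<^sup>2) + (\<Sum>j<n. (norm (x i j - th i))\<^sup>2 / (2 * s_x\<^sup>2)))"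

lemma lik_exp:
  fixes x :: "nat \<Rightarrow> nat \<Rightarrow> real^'d"
  shows "likelihood m n s_th s_x x th nu =
    ((2 * pi * s_th\<^sup>2) powr (- real CARD('d) / 2) * ((2 * pi * s_x\<^sup>2) powr (- real CARD('d) / 2)) ^ n) ^ m
    * exp (- Qf m n s_th s_x x th nu)"
proof -
  let ?A = "(2 * pi * s_th\<^sup>2) powr (- real CARD('d) / 2)"
  let ?B = "(2 * pi * s_x\<^sup>2) powr (- real CARD('d) / 2)"
  have "likelihood m n s_th s_x x th nu =
     (\<Prod>i<m. (?A * exp (- (norm (th i - nu))\<^sup>2 / (2 * s_th\<^sup>2))) * (\<Prod>j<n. ?B * exp (- (norm (x i j - th i))\<^sup>2 / (2 * s_x\<^sup>2))))"
    unfolding likelihood_def gauss_pdf_def by (simp add: norm_minus_commute)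
  also have "\<dots> = (\<Prod>i<m. (?A * ?B ^ n) * exp (- ((norm (th i - nu))\<^sup>2 / (2 * s_th\<^sup>2) + (\<Sum>j<n. (norm (x i j - th i))\<^sup>2 / (2 * s_x\<^sup>2)))))"
    by (intro prod.cong refl) (simp add: prod.distrib exp_sum[symmetric] sum_negf exp_add[symmetric] exp_diff algebra_simps)
  also have "\<dots> = (?A * ?B ^ n) ^ m * exp (- Qf m n s_th s_x x th nu)"
  proof -
    have "exp (- Qf m n s_th s_x x th nu) = (\<Prod>i<m. exp (- ((norm (th i - nu))\<^sup>2 / (2 * s_th\<^sup>2) + (\<Sum>j<n. (norm (x i j - th i))\<^sup>2 / (2 * s_x\<^sup>2)))))"
      unfolding Qf_def sum_negf[symmetric] by (rule exp_sum) simp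
    thus ?thesis by (simp add: prod.distrib)
  qed
  finally show ?thesis .
qed

lemma norm_add_sq: "(norm (a + b))\<^sup>2 = (norm a)\<^sup>2 + 2 * (a \<bullet> b) + (norm (b::'a::real_inner))\<^sup>2"
  by (simp add: power2_norm_eq_inner inner_add_left inner_add_right inner_commute)

lemma norm_diff_sq': "(norm (a - b))\<^sup>2 = (norm a)\<^sup>2 - 2 * (a \<bullet> b) + (norm (b::'a::real_inner))\<^sup>2"
  by (simp add: power2_norm_eq_inner inner_diff_left inner_diff_right inner_commute)

lemma per_i:
  fixes t ts nu nus :: "'a::real_inner" and xs :: "nat \<Rightarrow> 'a" and ta sx :: real
  assumes ta: "ta > 0" and sx: "sx > 0"
    and h: "(1/ta\<^sup>2) *\<^sub>R (ts - nus) = (1/sx\<^sup>2) *\<^sub>R (\<Sum>j<n. (xs j - ts))"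
  shows "(norm (t - nu))\<^sup>2/(2 * ta\<^sup>2) + (\<Sum>j<n. (norm (xs j - t))\<^sup>2/(2 * sx\<^sup>2))
       = (norm (ts - nus))\<^sup>2/(2 * ta\<^sup>2) + (\<Sum>j<n. (norm (xs j - ts))\<^sup>2/(2 * sx\<^sup>2))
         + ((norm ((t-ts) - (nu-nus)))\<^sup>2/(2 * ta\<^sup>2) + real n * (norm (t-ts))\<^sup>2/(2 * sx\<^sup>2))
         - ((ts - nus) \<bullet> (nu - nus)) / ta\<^sup>2"
proof -
  define A where "A = ts - nus"
  define D where "D = t - ts"
  define E where "E = nu - nus"
  define S where "S = (\<Sum>j<n. (xs j - ts))"
  have 1: "t - nu = A + (D - E)" unfolding A_def D_def E_def by (simp add: algebra_simps)
  have 2: "\<And>j. xs j - t = (xs j - ts) - D" unfolding D_def by (simp add: algebra_simps)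
  have "(\<Sum>j<n. (norm (xs j - t))\<^sup>2/(2 * sx\<^sup>2)) =
        (\<Sum>j<n. (norm (xs j - ts))\<^sup>2/(2 * sx\<^sup>2) - ((xs j - ts) \<bullet> D) / sx\<^sup>2 + (norm D)\<^sup>2/(2 * sx\<^sup>2))"
    unfolding 2 by (intro sum.cong refl, subst norm_diff_sq') (use sx in \<open>simp add: field_simps\<close>)
  also have "\<dots> = (\<Sum>j<n. (norm (xs j - ts))\<^sup>2/(2 * sx\<^sup>2)) - (S \<bullet> D) / sx\<^sup>2 + real n * (norm D)\<^sup>2/(2 * sx\<^sup>2)"
  proof -
    have SD: "S \<bullet> D = (\<Sum>j<n. (xs j - ts) \<bullet> D)" unfolding S_def by (rule inner_sum_left)
    show ?thesis unfolding SD by (simp add: sum.distrib sum_subtractf sum_divide_distrib)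
  qed
  also have "(S \<bullet> D) / sx\<^sup>2 = (A \<bullet> D) / ta\<^sup>2"
  proof -
    have "(S \<bullet> D) / sx\<^sup>2 = ((1/sx\<^sup>2) *\<^sub>R S) \<bullet> D" by simp
    also have "\<dots> = ((1/ta\<^sup>2) *\<^sub>R A) \<bullet> D" using h unfolding A_def S_def by simp
    finally show ?thesis by simp
  qed
  finally have X: "(\<Sum>j<n. (norm (xs j - t))\<^sup>2/(2 * sx\<^sup>2)) = (\<Sum>j<n. (norm (xs j - ts))\<^sup>2/(2 * sx\<^sup>2)) - (A \<bullet> D) / ta\<^sup>2 + real n * (norm D)\<^sup>2/(2 * sx\<^sup>2)" .
  have T: "(norm (t - nu))\<^sup>2/(2 * ta\<^sup>2) = (norm A)\<^sup>2/(2 * ta\<^sup>2) + (A \<bullet> D)/ta\<^sup>2 - (A \<bullet> E)/ta\<^sup>2 + (norm (D - E))\<^sup>2/(2 * ta\<^sup>2)"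
    unfolding 1 norm_add_sq using ta by (simp add: field_simps inner_diff_right)
  show ?thesis unfolding X T by (simp add: A_def D_def E_def)
qed

definition Rf :: "nat \<Rightarrow> nat \<Rightarrow> real \<Rightarrow> real \<Rightarrow> (nat \<Rightarrow> nat \<Rightarrow> real^'d) \<Rightarrow> (nat \<Rightarrow> real^'d) \<Rightarrow> real^'d \<Rightarrow> real" where
  "Rf m n s_th s_x x th nu = (\<Sum>i<m. (norm ((th i - thetahat m n s_th s_x x i) - (nu - muhat m n x)))\<^sup>2 / (2 * s_th\<^sup>2)
       + real n * (norm (th i - thetahat m n s_th s_x x i))\<^sup>2 / (2 * s_x\<^sup>2))"

lemma sum_xbar: "n \<ge> 1 \<Longrightarrow> (\<Sum>j<n. x i j) = real n *\<^sub>R xbar n x i"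
  unfolding xbar_def by simp

lemma sum_muhat: "m \<ge> 1 \<Longrightarrow> (\<Sum>i<m. xbar n x i) = real m *\<^sub>R muhat m n x"
  unfolding muhat_def by simp

lemma h_cond:
  assumes n: "n \<ge> 1" and ta: "s_th > 0" and sx: "s_x > 0"
  shows "(1/s_th\<^sup>2) *\<^sub>R (thetahat m n s_th s_x x i - muhat m n x)
       = (1/s_x\<^sup>2) *\<^sub>R (\<Sum>j<n. (x i j - thetahat m n s_th s_x x i))"
proof -
  let ?a = "shrink n s_th s_x"
  define v where "v = xbar n x i - muhat m n x"
  have L: "thetahat m n s_th s_x x i - muhat m n x = ?a *\<^sub>R v"
    unfolding thetahat_def v_def by (simp add: algebra_simps)
  have R: "(\<Sum>j<n. (x i j - thetahat m n s_th s_x x i)) = (real n * (1 - ?a)) *\<^sub>R v"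
    unfolding sum_subtractf sum_xbar[OF n] thetahat_def v_def by (simp add: algebra_simps sum_constant_scaleR del: sum_constant)
  have c: "?a / s_th\<^sup>2 = real n * (1 - ?a) / s_x\<^sup>2"
  proof -
    define T where "T = s_th\<^sup>2"
    define S where "S = s_x\<^sup>2 / real n"
    have T: "T > 0" using ta unfolding T_def by simp
    have S: "S > 0" using sx n unfolding S_def by simp
    have nS: "real n * S = s_x\<^sup>2" using n unfolding S_def by simp
    have a: "?a = T / (T + S)" unfolding shrink_def T_def S_def ..
    have 1: "1 - ?a = S / (T + S)" unfolding a using T S by (simp add: field_simps)
    have "?a / s_th\<^sup>2 = 1 / (T + S)"
    proof -
      have "T + S > 0" using T S by simp
      have ST: "S + T \<noteq> 0" "T + S \<noteq> 0" using T S by auto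
      have "S * T + T * T = (S + T) * T" by (simp add: algebra_simps)
      hence ST3: "S * T + T * T \<noteq> 0" using ST T by simp
      have "(T / (T + S)) / T = 1 / (T + S)" using T ST ST3 by (simp add: field_simps)
      thus ?thesis using a T_def by simp
    qed
    moreover have "real n * (1 - ?a) / s_x\<^sup>2 = 1 / (T + S)"
    proof -
      have "S * (S * real n) + S * (T * real n) = (S * real n) * (S + T)" by (simp add: algebra_simps)
      moreover have "(S * real n) * (S + T) \<noteq> 0" using T S n by simp
      ultimately have ne: "S * (S * real n) + S * (T * real n) \<noteq> 0" by simp
      show ?thesis unfolding 1 nS[symmetric] using T S n ne by (simp add: field_simps)
    qed
    ultimately show ?thesis by simp
  qed
  show ?thesis unfolding L R using c by simp
qed

lemma sum_A:
  assumes m: "m \<ge> 1"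
  shows "(\<Sum>i<m. (thetahat m n s_th s_x x i - muhat m n x)) = 0"
proof -
  have "(\<Sum>i<m. (thetahat m n s_th s_x x i - muhat m n x)) = shrink n s_th s_x *\<^sub>R ((\<Sum>i<m. xbar n x i) - real m *\<^sub>R muhat m n x)"
    unfolding thetahat_def by (simp add: algebra_simps sum.distrib sum_subtractf scaleR_sum_right sum_constant_scaleR del: sum_constant)
  thus ?thesis unfolding sum_muhat[OF m] by simp
qed

lemma Qf_decomp:
  assumes m: "m \<ge> 1" and n: "n \<ge> 1" and ta: "s_th > 0" and sx: "s_x > 0"
  shows "Qf m n s_th s_x x th nu = Qf m n s_th s_x x (thetahat m n s_th s_x x) (muhat m n x) + Rf m n s_th s_x x th nu"
proof -
  let ?ts = "thetahat m n s_th s_x x" and ?nus = "muhat m n x"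
  have "Qf m n s_th s_x x th nu = (\<Sum>i<m. ((norm (?ts i - ?nus))\<^sup>2/(2 * s_th\<^sup>2) + (\<Sum>j<n. (norm (x i j - ?ts i))\<^sup>2/(2 * s_x\<^sup>2)))
         + ((norm ((th i - ?ts i) - (nu - ?nus)))\<^sup>2/(2 * s_th\<^sup>2) + real n * (norm (th i - ?ts i))\<^sup>2/(2 * s_x\<^sup>2))
         - ((?ts i - ?nus) \<bullet> (nu - ?nus)) / s_th\<^sup>2)"
    unfolding Qf_def by (intro sum.cong refl per_i[OF ta sx h_cond[OF n ta sx]])
  also have "\<dots> = Qf m n s_th s_x x ?ts ?nus + Rf m n s_th s_x x th nu - ((\<Sum>i<m. (?ts i - ?nus)) \<bullet> (nu - ?nus)) / s_th\<^sup>2"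
  proof -
    have "(\<Sum>i<m. (?ts i - ?nus) \<bullet> (nu - ?nus) / s_th\<^sup>2) = ((\<Sum>i<m. (?ts i - ?nus)) \<bullet> (nu - ?nus)) / s_th\<^sup>2"
      by (simp only: inner_sum_left sum_divide_distrib)
    thus ?thesis unfolding Qf_def Rf_def by (simp only: sum.distrib sum_subtractf)
  qed
  finally show ?thesis unfolding sum_A[OF m] by simp
qed

lemma Rf_nonneg: "0 \<le> Rf m n s_th s_x x th nu"
  unfolding Rf_def by (intro sum_nonneg add_nonneg_nonneg) auto

lemma Rf_zero:
  assumes m: "m \<ge> 1" and n: "n \<ge> 1" and ta: "s_th > 0" and sx: "s_x > 0"
  shows "Rf m n s_th s_x x th nu \<le> 0 \<longleftrightarrow> (nu = muhat m n x \<and> (\<forall>i<m. th i = thetahat m n s_th s_x x i))"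
proof
  assume R: "Rf m n s_th s_x x th nu \<le> 0"
  let ?f = "\<lambda>i. (norm ((th i - thetahat m n s_th s_x x i) - (nu - muhat m n x)))\<^sup>2 / (2 * s_th\<^sup>2)
       + real n * (norm (th i - thetahat m n s_th s_x x i))\<^sup>2 / (2 * s_x\<^sup>2)"
  have nn: "\<And>i. 0 \<le> ?f i" by (intro add_nonneg_nonneg) auto
  have "(\<Sum>i<m. ?f i) = 0" using R Rf_nonneg[of m n s_th s_x x th nu] unfolding Rf_def by linarith
  hence z: "\<And>i. i < m \<Longrightarrow> ?f i = 0" using nn by (subst (asm) sum_nonneg_eq_0_iff) auto
  have th: "th i = thetahat m n s_th s_x x i" if i: "i < m" for i
  proof -
    have a: "0 \<le> (norm ((th i - thetahat m n s_th s_x x i) - (nu - muhat m n x)))\<^sup>2 / (2 * s_th\<^sup>2)" by simp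
    have b: "0 \<le> real n * (norm (th i - thetahat m n s_th s_x x i))\<^sup>2 / (2 * s_x\<^sup>2)" by simp
    have "real n * (norm (th i - thetahat m n s_th s_x x i))\<^sup>2 / (2 * s_x\<^sup>2) = 0" using z[OF i] a b by linarith
    thus ?thesis using n sx by simp
  qed
  moreover have "nu = muhat m n x"
  proof -
    have "(norm ((th 0 - thetahat m n s_th s_x x 0) - (nu - muhat m n x)))\<^sup>2 / (2 * s_th\<^sup>2) = 0"
      using z[of 0] th[of 0] m by simp
    thus ?thesis using ta th[of 0] m by simp
  qed
  ultimately show "nu = muhat m n x \<and> (\<forall>i<m. th i = thetahat m n s_th s_x x i)" by simp
next
  assume "nu = muhat m n x \<and> (\<forall>i<m. th i = thetahat m n s_th s_x x i)"
  thus "Rf m n s_th s_x x th nu \<le> 0" unfolding Rf_def by simp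
qed

lemma mle:
  fixes x :: "nat \<Rightarrow> nat \<Rightarrow> real^'d"
  assumes m: "m \<ge> 1" and n: "n \<ge> 1" and ta: "s_th > 0" and sx: "s_x > 0"
  shows "(\<forall>th' nu'. likelihood m n s_th s_x x th' nu' \<le> likelihood m n s_th s_x x th nu)
          \<longleftrightarrow> (nu = muhat m n x \<and> (\<forall>i<m. th i = thetahat m n s_th s_x x i))"
proof -
  define C where "C = ((2 * pi * s_th\<^sup>2) powr (- real CARD('d) / 2) * ((2 * pi * s_x\<^sup>2) powr (- real CARD('d) / 2)) ^ n) ^ m"
  have C: "C > 0" unfolding C_def using ta sx by simp
  have L: "\<And>th nu. likelihood m n s_th s_x x th nu = C * exp (- Qf m n s_th s_x x th nu)"
    unfolding C_def by (rule lik_exp)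
  have le: "likelihood m n s_th s_x x th' nu' \<le> likelihood m n s_th s_x x th nu \<longleftrightarrow>
      Qf m n s_th s_x x th nu \<le> Qf m n s_th s_x x th' nu'" for th' nu'
    unfolding L using C by simp
  let ?Q = "Qf m n s_th s_x x (thetahat m n s_th s_x x) (muhat m n x)"
  have D: "\<And>th nu. Qf m n s_th s_x x th nu = ?Q + Rf m n s_th s_x x th nu"
    by (rule Qf_decomp[OF m n ta sx])
  show ?thesis
  proof
    assume H: "\<forall>th' nu'. likelihood m n s_th s_x x th' nu' \<le> likelihood m n s_th s_x x th nu"
    have "Qf m n s_th s_x x th nu \<le> ?Q"
      using H[rule_format, of "thetahat m n s_th s_x x" "muhat m n x"] unfolding le .
    hence "Rf m n s_th s_x x th nu \<le> 0" unfolding D[of th nu] by simp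
    thus "nu = muhat m n x \<and> (\<forall>i<m. th i = thetahat m n s_th s_x x i)" using Rf_zero[OF m n ta sx] by blast
  next
    assume H: "nu = muhat m n x \<and> (\<forall>i<m. th i = thetahat m n s_th s_x x i)"
    hence "Rf m n s_th s_x x th nu \<le> 0" using Rf_zero[OF m n ta sx] by blast
    hence "Rf m n s_th s_x x th nu = 0" using Rf_nonneg[of m n s_th s_x x th nu] by linarith
    show "\<forall>th' nu'. likelihood m n s_th s_x x th' nu' \<le> likelihood m n s_th s_x x th nu"
    proof (intro allI)
      fix th' nu'
      have "Qf m n s_th s_x x th nu \<le> Qf m n s_th s_x x th' nu'"
        using D[of th nu] D[of th' nu'] \<open>Rf m n s_th s_x x th nu = 0\<close> Rf_nonneg[of m n s_th s_x x th' nu'] by linarith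
      thus "likelihood m n s_th s_x x th' nu' \<le> likelihood m n s_th s_x x th nu" using le by blast
    qed
  qed
qed



lemma sum_delta_scaleR:
  fixes v :: "nat \<Rightarrow> 'v::real_vector"
  assumes "i < m"
  shows "(\<Sum>k<m. (if k = i then d else 0) *\<^sub>R v k) = d *\<^sub>R v i"
proof -
  have "(\<Sum>k<m. (if k = i then d else 0) *\<^sub>R v k) = (\<Sum>k<m. if k = i then d *\<^sub>R v k else 0)"
    by (intro sum.cong refl) auto
  thus ?thesis using assms by (simp add: sum.delta)
qed

lemma sum_split_minus:
  fixes v :: "nat \<Rightarrow> 'v::real_vector"
  assumes "i < m"
  shows "(\<Sum>k<m. (c - (if k = i then d else 0)) *\<^sub>R v k) = c *\<^sub>R (\<Sum>k<m. v k) - d *\<^sub>R v i"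
  by (simp only: scaleR_left_diff_distrib sum_subtractf scaleR_sum_right sum_delta_scaleR[OF assms])

lemma rep:
  fixes T :: "nat \<Rightarrow> 'v::real_vector" and Xv :: "nat \<Rightarrow> nat \<Rightarrow> 'v" and mu :: 'v
  assumes m: "m \<ge> 1" and n: "n \<ge> 1" and i: "i < m"
  shows "a *\<^sub>R ((1 / real n) *\<^sub>R (\<Sum>j<n. Xv i j)) + (1 - a) *\<^sub>R ((1 / real m) *\<^sub>R (\<Sum>i'<m. (1 / real n) *\<^sub>R (\<Sum>j<n. Xv i' j))) - T i
   = (\<Sum>k<m. ((1 - a) / real m - (if k = i then 1 - a else 0)) *\<^sub>R (T k - mu))
     + (\<Sum>k<m. \<Sum>j<n. ((1 - a) / (real m * real n) + (if k = i then a / real n else 0)) *\<^sub>R (Xv k j - T k))"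
proof -
  define W where "W k j = Xv k j - T k" for k j
  have XW: "\<And>k. (1 / real n) *\<^sub>R (\<Sum>j<n. Xv k j) = T k + (1 / real n) *\<^sub>R (\<Sum>j<n. W k j)"
  proof -
    fix k
    have "(\<Sum>j<n. Xv k j) = (\<Sum>j<n. T k + W k j)" unfolding W_def by simp
    also have "\<dots> = real n *\<^sub>R T k + (\<Sum>j<n. W k j)" by (simp add: sum.distrib sum_constant_scaleR del: sum_constant)
    finally show "(1 / real n) *\<^sub>R (\<Sum>j<n. Xv k j) = T k + (1 / real n) *\<^sub>R (\<Sum>j<n. W k j)"
      using n by (simp add: scaleR_add_right)
  qed
  have L: "a *\<^sub>R ((1 / real n) *\<^sub>R (\<Sum>j<n. Xv i j)) + (1 - a) *\<^sub>R ((1 / real m) *\<^sub>R (\<Sum>i'<m. (1 / real n) *\<^sub>R (\<Sum>j<n. Xv i' j))) - T i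
     = ((1 - a) / real m) *\<^sub>R (\<Sum>k<m. T k) + (a - 1) *\<^sub>R T i + ((1 - a) / (real m * real n)) *\<^sub>R (\<Sum>k<m. \<Sum>j<n. W k j) + (a / real n) *\<^sub>R (\<Sum>j<n. W i j)"
    unfolding XW by (simp add: sum.distrib scaleR_add_right scaleR_sum_right algebra_simps)
  have R1: "(\<Sum>k<m. ((1 - a) / real m - (if k = i then 1 - a else 0)) *\<^sub>R (T k - mu))
     = ((1 - a) / real m) *\<^sub>R (\<Sum>k<m. T k) + (a - 1) *\<^sub>R T i"
  proof -
    have "(\<Sum>k<m. ((1 - a) / real m - (if k = i then 1 - a else 0)) *\<^sub>R (T k - mu))
      = ((1 - a) / real m) *\<^sub>R (\<Sum>k<m. (T k - mu)) - (1 - a) *\<^sub>R (T i - mu)"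
      by (rule sum_split_minus[OF i])
    also have "\<dots> = ((1 - a) / real m) *\<^sub>R (\<Sum>k<m. T k) + (a - 1) *\<^sub>R T i"
    proof -
      have cm: "(real m - a * real m) / real m = 1 - a" using m by (simp add: field_simps)
      show ?thesis using m by (simp add: sum_subtractf sum_constant_scaleR algebra_simps cm del: sum_constant)
    qed
    finally show ?thesis .
  qed
  have R2: "(\<Sum>k<m. \<Sum>j<n. ((1 - a) / (real m * real n) + (if k = i then a / real n else 0)) *\<^sub>R (Xv k j - T k))
     = ((1 - a) / (real m * real n)) *\<^sub>R (\<Sum>k<m. \<Sum>j<n. W k j) + (a / real n) *\<^sub>R (\<Sum>j<n. W i j)"
  proof -
    have "(\<Sum>k<m. \<Sum>j<n. ((1 - a) / (real m * real n) + (if k = i then a / real n else 0)) *\<^sub>R (Xv k j - T k))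
       = (\<Sum>k<m. ((1 - a) / (real m * real n)) *\<^sub>R (\<Sum>j<n. W k j) + (if k = i then a / real n else 0) *\<^sub>R (\<Sum>j<n. W k j))"
      unfolding W_def by (simp add: scaleR_add_left sum.distrib scaleR_sum_right)
    also have "\<dots> = ((1 - a) / (real m * real n)) *\<^sub>R (\<Sum>k<m. \<Sum>j<n. W k j) + (a / real n) *\<^sub>R (\<Sum>j<n. W i j)"
      by (simp only: sum.distrib scaleR_sum_right[symmetric] sum_delta_scaleR[OF i])
    finally show ?thesis .
  qed
  show ?thesis unfolding L R1 R2 by simp
qed



lemma sum_if_const:
  assumes "i < m"
  shows "(\<Sum>k<m. if k = i then A else B) = A + (real m - 1) * (B::real)"
proof -
  have "(\<Sum>k<m. if k = i then A else B) = (if i = i then A else B) + (\<Sum>k\<in>{..<m} - {i}. if k = i then A else B)"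
    using assms by (subst sum.remove[of _ i]) auto
  also have "(\<Sum>k\<in>{..<m} - {i}. if k = i then A else B) = (\<Sum>k\<in>{..<m} - {i}. B)"
    by (intro sum.cong refl) auto
  also have "\<dots> = (real m - 1) * B" using assms by (simp add: of_nat_diff)
  finally show ?thesis by simp
qed

lemma final_alg:
  fixes t s M N :: real
  assumes t: "t \<ge> 0" and s: "s > 0" and M: "M \<ge> 1" and N: "N \<ge> 1"
  defines "a \<equiv> t / (t + s / N)"
  shows "t * (((1 - a) / M - (1 - a))\<^sup>2 + (M - 1) * ((1 - a) / M)\<^sup>2)
       + s * (N * ((1 - a) / (M * N) + a / N)\<^sup>2 + (M - 1) * (N * ((1 - a) / (M * N))\<^sup>2))
       = s / N * ((1 - a) / M + a)"
proof -
  have pos: "t + s / N > 0" using t s N by (simp add: add_nonneg_pos)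
  have key: "t * (1 - a) = a * (s / N)" unfolding a_def using pos by (simp add: field_simps)
  have "t * (((1 - a) / M - (1 - a))\<^sup>2 + (M - 1) * ((1 - a) / M)\<^sup>2) = (t * (1 - a)) * (1 - a) * ((M - 1) / M)"
    using M by (simp add: field_simps power2_eq_square)
  also have "\<dots> = (s / N) * (a * (1 - a) * ((M - 1) / M))" unfolding key by simp
  finally have A: "t * (((1 - a) / M - (1 - a))\<^sup>2 + (M - 1) * ((1 - a) / M)\<^sup>2) = (s / N) * (a * (1 - a) * ((M - 1) / M))" .
  have B: "s * (N * ((1 - a) / (M * N) + a / N)\<^sup>2 + (M - 1) * (N * ((1 - a) / (M * N))\<^sup>2))
      = (s / N) * (((1 - a) / M + a)\<^sup>2 + (M - 1) * ((1 - a) / M)\<^sup>2)"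
    using M N by (simp add: field_simps power2_eq_square)
  have C: "a * (1 - a) * ((M - 1) / M) + (((1 - a) / M + a)\<^sup>2 + (M - 1) * ((1 - a) / M)\<^sup>2) = (1 - a) / M + a"
    using M by (simp add: field_simps power2_eq_square)
  show ?thesis unfolding A B distrib_left[symmetric] C ..
qed



lemma part2:
  fixes m n :: nat and s_th s_x :: real
    and M :: "'w measure" and mu :: "real^'d"
    and Th :: "nat \<Rightarrow> 'w \<Rightarrow> real^'d" and X :: "nat \<Rightarrow> nat \<Rightarrow> 'w \<Rightarrow> real^'d"
  assumes m: "m \<ge> 1" and n: "n \<ge> 1" and ta: "s_th \<ge> 0" and sx: "s_x > 0"
    and PS: "prob_space M"
    and ThM: "\<forall>i<m. Th i \<in> borel_measurable M"
    and XM: "\<forall>i<m. \<forall>j<n. X i j \<in> borel_measurable M"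
    and IND: "prob_space.indep_vars M (\<lambda>_. borel)
           (\<lambda>k \<omega>. case k of Inl i \<Rightarrow> Th i \<omega> | Inr (i, j) \<Rightarrow> X i j \<omega> - Th i \<omega>)
           (Inl ` {..<m} \<union> Inr ` ({..<m} \<times> {..<n}))"
    and DT: "\<forall>i<m. distr M borel (Th i) = gaussian_vec mu s_th"
    and DX: "\<forall>i<m. \<forall>j<n. distr M borel (\<lambda>\<omega>. X i j \<omega> - Th i \<omega>) = gaussian_vec 0 s_x"
    and i: "i < m"
  shows "integrable M (\<lambda>\<omega>. (norm (thetahat m n s_th s_x (\<lambda>i' j. X i' j \<omega>) i - Th i \<omega>))\<^sup>2)
          \<and> (\<integral>\<omega>. (norm (thetahat m n s_th s_x (\<lambda>i' j. X i' j \<omega>) i - Th i \<omega>))\<^sup>2 \<partial>M)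
              \<le> real CARD('d) * s_x\<^sup>2 / real n
                 * ((1 - shrink n s_th s_x) / real m + shrink n s_th s_x)"
proof -
  interpret prob_space M by (rule PS)
  define a where "a = shrink n s_th s_x"
  define J :: "(nat + nat \<times> nat) set" where "J = Inl ` {..<m} \<union> Inr ` ({..<m} \<times> {..<n})"
  define V where "V = (\<lambda>k \<omega>. case k of Inl i \<Rightarrow> Th i \<omega> | Inr (i, j) \<Rightarrow> X i j \<omega> - Th i \<omega>)"
  define cen :: "nat + nat \<times> nat \<Rightarrow> real^'d" where "cen k = (case k of Inl _ \<Rightarrow> mu | Inr _ \<Rightarrow> 0)" for k
  define sd :: "nat + nat \<times> nat \<Rightarrow> real" where "sd k = (case k of Inl _ \<Rightarrow> s_th | Inr _ \<Rightarrow> s_x)" for k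
  define coef :: "nat + nat \<times> nat \<Rightarrow> real" where "coef k = (case k of
      Inl k \<Rightarrow> (1 - a) / real m - (if k = i then 1 - a else 0)
    | Inr (k, j) \<Rightarrow> (1 - a) / (real m * real n) + (if k = i then a / real n else 0))" for k
  have finJ: "finite J" unfolding J_def by simp
  have F1: "V k \<in> borel_measurable M \<and> distr M borel (V k) = gaussian_vec (cen k) (sd k) \<and> sd k \<ge> 0"
    if k: "k \<in> J" for k
  proof -
    from k consider (L) k' where "k = Inl k'" "k' < m" | (R) k' j where "k = Inr (k', j)" "k' < m" "j < n"
      unfolding J_def by auto
    thus ?thesis
    proof cases
      case L thus ?thesis using ThM DT ta by (simp add: V_def cen_def sd_def)
    next
      case R thus ?thesis using ThM XM DX sx by (auto simp: V_def cen_def sd_def intro!: borel_measurable_diff)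
    qed
  qed
  have IND': "indep_vars (\<lambda>_. borel) V J" using IND unfolding V_def J_def .
  define U where "U q k \<omega> = (V k \<omega> - cen k) $ q" for q k \<omega>
  have F2: "indep_vars (\<lambda>_. borel) (U q) J" for q
  proof -
    have "indep_vars (\<lambda>_. borel) (\<lambda>k \<omega>. (\<lambda>v. (v - cen k) $ q) (V k \<omega>)) J"
      by (rule indep_vars_compose2[OF IND']) simp
    thus ?thesis unfolding U_def by simp
  qed
  have F3: "thetahat m n s_th s_x (\<lambda>i' j. X i' j \<omega>) i - Th i \<omega> = (\<Sum>k\<in>J. coef k *\<^sub>R (V k \<omega> - cen k))" for \<omega>
  proof -
    have "thetahat m n s_th s_x (\<lambda>i' j. X i' j \<omega>) i - Th i \<omega>
      = (\<Sum>k<m. ((1 - a) / real m - (if k = i then 1 - a else 0)) *\<^sub>R (Th k \<omega> - mu))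
     + (\<Sum>k<m. \<Sum>j<n. ((1 - a) / (real m * real n) + (if k = i then a / real n else 0)) *\<^sub>R (X k j \<omega> - Th k \<omega>))"
      unfolding thetahat_def xbar_def muhat_def a_def[symmetric] by (rule rep[OF m n i])
    also have "\<dots> = (\<Sum>k\<in>J. coef k *\<^sub>R (V k \<omega> - cen k))"
      unfolding J_def
      by (subst sum.union_disjoint) (auto simp: sum.reindex sum.cartesian_product' coef_def V_def cen_def)
    finally show ?thesis .
  qed
  have F4: "(norm (thetahat m n s_th s_x (\<lambda>i' j. X i' j \<omega>) i - Th i \<omega>))\<^sup>2 = (\<Sum>q\<in>UNIV. (\<Sum>k\<in>J. coef k * U q k \<omega>)\<^sup>2)" for \<omega>
    unfolding F3 power2_norm_eq_inner inner_vec_def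
    by (simp add: sum_component U_def power2_eq_square)
  have mom: "integrable M (U q k) \<and> (\<integral>\<omega>. U q k \<omega> \<partial>M) = 0 \<and> integrable M (\<lambda>\<omega>. (U q k \<omega>)\<^sup>2) \<and> (\<integral>\<omega>. (U q k \<omega>)\<^sup>2 \<partial>M) = (sd k)\<^sup>2"
    if k: "k \<in> J" for q k
    using gauss_moments[of "V k" M "cen k" "sd k" q] F1[OF k] unfolding U_def by auto
  have Q: "integrable M (\<lambda>\<omega>. (\<Sum>k\<in>J. coef k * U q k \<omega>)\<^sup>2) \<and>
           (\<integral>\<omega>. (\<Sum>k\<in>J. coef k * U q k \<omega>)\<^sup>2 \<partial>M) = (\<Sum>k\<in>J. (coef k)\<^sup>2 * (sd k)\<^sup>2)" for q
  proof -
    have "integrable M (\<lambda>\<omega>. (\<Sum>k\<in>J. coef k * U q k \<omega>)\<^sup>2)"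
      by (rule var_sum_indep(1)[OF finJ F2]) (use mom in auto)
    moreover have "(\<integral>\<omega>. (\<Sum>k\<in>J. coef k * U q k \<omega>)\<^sup>2 \<partial>M) = (\<Sum>k\<in>J. (coef k)\<^sup>2 * (\<integral>\<omega>. (U q k \<omega>)\<^sup>2 \<partial>M))"
      by (rule var_sum_indep(2)[OF finJ F2]) (use mom in auto)
    moreover have "(\<Sum>k\<in>J. (coef k)\<^sup>2 * (\<integral>\<omega>. (U q k \<omega>)\<^sup>2 \<partial>M)) = (\<Sum>k\<in>J. (coef k)\<^sup>2 * (sd k)\<^sup>2)"
      using mom by (intro sum.cong refl) auto
    ultimately show ?thesis by simp
  qed
  have INT: "integrable M (\<lambda>\<omega>. (norm (thetahat m n s_th s_x (\<lambda>i' j. X i' j \<omega>) i - Th i \<omega>))\<^sup>2)"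
    unfolding F4 using Q by (intro Bochner_Integration.integrable_sum) auto
  have EQ: "(\<integral>\<omega>. (norm (thetahat m n s_th s_x (\<lambda>i' j. X i' j \<omega>) i - Th i \<omega>))\<^sup>2 \<partial>M)
      = real CARD('d) * (\<Sum>k\<in>J. (coef k)\<^sup>2 * (sd k)\<^sup>2)"
    unfolding F4 using Q by (subst Bochner_Integration.integral_sum) auto
  have F5: "(\<Sum>k\<in>J. (coef k)\<^sup>2 * (sd k)\<^sup>2) = s_x\<^sup>2 / real n * ((1 - a) / real m + a)"
  proof -
    have "(\<Sum>k\<in>J. (coef k)\<^sup>2 * (sd k)\<^sup>2)
       = (\<Sum>k<m. ((1 - a) / real m - (if k = i then 1 - a else 0))\<^sup>2 * s_th\<^sup>2)
       + (\<Sum>k<m. \<Sum>j<n. ((1 - a) / (real m * real n) + (if k = i then a / real n else 0))\<^sup>2 * s_x\<^sup>2)"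
      unfolding J_def
      by (subst sum.union_disjoint) (auto simp: sum.reindex sum.cartesian_product' coef_def sd_def)
    also have "(\<Sum>k<m. ((1 - a) / real m - (if k = i then 1 - a else 0))\<^sup>2 * s_th\<^sup>2)
       = s_th\<^sup>2 * (\<Sum>k<m. if k = i then ((1 - a) / real m - (1 - a))\<^sup>2 else ((1 - a) / real m)\<^sup>2)"
      by (simp add: sum_distrib_left if_distrib[of "\<lambda>x. ((1 - a) / real m - x)\<^sup>2"] mult.commute cong: if_cong)
    also have "\<dots> = s_th\<^sup>2 * (((1 - a) / real m - (1 - a))\<^sup>2 + (real m - 1) * ((1 - a) / real m)\<^sup>2)"
      by (simp only: sum_if_const[OF i])
    also have "(\<Sum>k<m. \<Sum>j<n. ((1 - a) / (real m * real n) + (if k = i then a / real n else 0))\<^sup>2 * s_x\<^sup>2)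
       = s_x\<^sup>2 * (\<Sum>k<m. if k = i then real n * ((1 - a) / (real m * real n) + a / real n)\<^sup>2 else real n * ((1 - a) / (real m * real n))\<^sup>2)"
      by (simp add: sum_distrib_left if_distrib[of "\<lambda>x. ((1 - a) / (real m * real n) + x)\<^sup>2"] mult.commute cong: if_cong)
         (intro sum.cong refl, auto)
    also have "\<dots> = s_x\<^sup>2 * (real n * ((1 - a) / (real m * real n) + a / real n)\<^sup>2 + (real m - 1) * (real n * ((1 - a) / (real m * real n))\<^sup>2))"
      by (simp only: sum_if_const[OF i])
    also have "s_th\<^sup>2 * (((1 - a) / real m - (1 - a))\<^sup>2 + (real m - 1) * ((1 - a) / real m)\<^sup>2)
       + s_x\<^sup>2 * (real n * ((1 - a) / (real m * real n) + a / real n)\<^sup>2 + (real m - 1) * (real n * ((1 - a) / (real m * real n))\<^sup>2))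
       = s_x\<^sup>2 / real n * ((1 - a) / real m + a)"
      unfolding a_def shrink_def
      by (rule final_alg) (use ta sx m n in auto)
    finally show ?thesis .
  qed
  show ?thesis using INT EQ F5 unfolding a_def by simp
qed


theorem theorem1:
  fixes m n :: nat and s_th s_x :: real
    and M :: "'w measure" and mu :: "real^'d"
    and Th :: "nat \<Rightarrow> 'w \<Rightarrow> real^'d" and X :: "nat \<Rightarrow> nat \<Rightarrow> 'w \<Rightarrow> real^'d"
  assumes "m \<ge> 1" and "n \<ge> 1" and "s_th \<ge> 0" and "s_x > 0"
  shows
    "(s_th > 0 \<longrightarrow>
       (\<forall>(x :: nat \<Rightarrow> nat \<Rightarrow> real^'d) (th :: nat \<Rightarrow> real^'d) (nu :: real^'d).
          (\<forall>th' nu'. likelihood m n s_th s_x x th' nu' \<le> likelihood m n s_th s_x x th nu)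
          \<longleftrightarrow> (nu = muhat m n x \<and> (\<forall>i<m. th i = thetahat m n s_th s_x x i))))
     \<and>
     ((prob_space M
       \<and> (\<forall>i<m. Th i \<in> borel_measurable M)
       \<and> (\<forall>i<m. \<forall>j<n. X i j \<in> borel_measurable M)
       \<and> prob_space.indep_vars M (\<lambda>_. borel)
           (\<lambda>k \<omega>. case k of Inl i \<Rightarrow> Th i \<omega> | Inr (i, j) \<Rightarrow> X i j \<omega> - Th i \<omega>)
           (Inl ` {..<m} \<union> Inr ` ({..<m} \<times> {..<n}))
       \<and> (\<forall>i<m. distr M borel (Th i) = gaussian_vec mu s_th)
       \<and> (\<forall>i<m. \<forall>j<n. distr M borel (\<lambda>\<omega>. X i j \<omega> - Th i \<omega>) = gaussian_vec 0 s_x))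
      \<longrightarrow> (\<forall>i<m.
            integrable M (\<lambda>\<omega>. (norm (thetahat m n s_th s_x (\<lambda>i' j. X i' j \<omega>) i - Th i \<omega>))\<^sup>2)
          \<and> (\<integral>\<omega>. (norm (thetahat m n s_th s_x (\<lambda>i' j. X i' j \<omega>) i - Th i \<omega>))\<^sup>2 \<partial>M)
              \<le> real CARD('d) * s_x\<^sup>2 / real n
                 * ((1 - shrink n s_th s_x) / real m + shrink n s_th s_x)))"
  proof (intro conjI impI allI)
  assume ta: "s_th > 0"
  fix x :: "nat \<Rightarrow> nat \<Rightarrow> real^'d" and th :: "nat \<Rightarrow> real^'d" and nu :: "real^'d"
  show "(\<forall>th' nu'. likelihood m n s_th s_x x th' nu' \<le> likelihood m n s_th s_x x th nu)
          \<longleftrightarrow> (nu = muhat m n x \<and> (\<forall>i<m. th i = thetahat m n s_th s_x x i))"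
    by (rule mle[OF assms(1,2) ta assms(4)])
next
  fix i assume H: "prob_space M
       \<and> (\<forall>i<m. Th i \<in> borel_measurable M)
       \<and> (\<forall>i<m. \<forall>j<n. X i j \<in> borel_measurable M)
       \<and> prob_space.indep_vars M (\<lambda>_. borel)
           (\<lambda>k \<omega>. case k of Inl i \<Rightarrow> Th i \<omega> | Inr (i, j) \<Rightarrow> X i j \<omega> - Th i \<omega>)
           (Inl ` {..<m} \<union> Inr ` ({..<m} \<times> {..<n}))
       \<and> (\<forall>i<m. distr M borel (Th i) = gaussian_vec mu s_th)
       \<and> (\<forall>i<m. \<forall>j<n. distr M borel (\<lambda>\<omega>. X i j \<omega> - Th i \<omega>) = gaussian_vec 0 s_x)"
    and i: "i < m"
  note P = part2[OF assms, of M Th X mu i] H i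
  show "integrable M (\<lambda>\<omega>. (norm (thetahat m n s_th s_x (\<lambda>i' j. X i' j \<omega>) i - Th i \<omega>))\<^sup>2)"
    using P by blast
  show "(\<integral>\<omega>. (norm (thetahat m n s_th s_x (\<lambda>i' j. X i' j \<omega>) i - Th i \<omega>))\<^sup>2 \<partial>M)
              \<le> real CARD('d) * s_x\<^sup>2 / real n
                 * ((1 - shrink n s_th s_x) / real m + shrink n s_th s_x)"
    using P by blast
qed

end
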